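(* Let $\mathbb X$ and $\mathbb Y$ be $L$-structures with $|X|=|Y|=\kappa\ge\omega$. Then: (I) The following are equivalent: (a) $\mathbb X\preccurlyeq_c\mathbb Y$; (b) there exists a $\kappa$-closed back and forth system $\Pi\subseteq\mathrm{PC}(\mathbb X,\mathbb Y)$; (c) player II has a winning strategy in the game $G^{\preccurlyeq_c}_\kappa(\mathbb X,\mathbb Y)$. (II) The following are equivalent: (a) $\mathbb X\sim_c\mathbb Y$; (b) there are $\kappa$-closed back and forth systems $\Pi_{\mathbb X,\mathbb Y}\subseteq\mathrm{PC}(\mathbb X,\mathbb Y)$ and $\Pi_{\mathbb Y,\mathbb X}\subseteq\mathrm{PC}(\mathbb Y,\mathbb X)$; (c) player II has winning strategies in both games $G^{\preccurlyeq_c}_\kappa(\mathbb X,\mathbb Y)$ and $G^{\preccurlyeq_c}_\kappa(\mathbb Y,\mathbb X)$.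
   Context: $L=\langle R_i:i\in I\rangle$ is a relational language, $R_i$ of arity $n_i$; for an $L$-structure $\mathbb X$ with domain $X$, $R_i^{\mathbb X}$ is the interpretation of $R_i$. For a map $f$ and tuple $\bar x=\langle x_0,\dots,x_{k-1}\rangle$ write $f\bar x=\langle f(x_0),\dots,f(x_{k-1})\rangle$. A partial condensation from $\mathbb X$ to $\mathbb Y$ is a bijection $f$ from a set $\operatorname{dom}f\subseteq X$ onto a set $\operatorname{ran}f\subseteq Y$ such that for all $i\in I$ and $\bar x\in(\operatorname{dom}f)^{n_i}$, $\bar x\in R_i^{\mathbb X}$ implies $f\bar x\in R_i^{\mathbb Y}$; $\mathrm{PC}(\mathbb X,\mathbb Y)$ is the set of these. A condensation is a partial condensation with domain $X$ and range $Y$ (a bijective homomorphism). $\mathbb X\preccurlyeq_c\mathbb Y$ means there is a condensation from $\mathbb X$ onto $\mathbb Y$; $\mathbb X\sim_c\mathbb Y$ means $\mathbb X\preccurlyeq_c\mathbb Y$ and $\mathbb Y\preccurlyeq_c\mathbb X$. A back and forth system (b.f.s.) is a nonempty $\Pi\subseteq\mathrm{PC}(\mathbb X,\mathbb Y)$ such that (e1) for all $f\in\Pi$ and $x\in X$ there is $g\in\Pi$ with $f\subseteq g$ and $x\in\operatorname{dom}g$, and (e2) for all $f\in\Pi$ and $y\in Y$ there is $g\in\Pi$ with $f\subseteq g$ and $y\in\operatorname{ran}g$. A partial order $\langle P,\le\rangle$ is $\kappa$-closed if for every ordinal $\gamma<\kappa$ and every sequence $\langle p_\alpha:\alpha<\gamma\rangle$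 in $P$ with $p_\beta\le p_\alpha$ whenever $\alpha<\beta<\gamma$, there is $p\in P$ with $p\le p_\alpha$ for all $\alpha<\gamma$. A b.f.s. $\Pi$ is $\kappa$-closed if $\langle\Pi,\supseteq\rangle$ is $\kappa$-closed. For a cardinal $\kappa$, the game $G^{\preccurlyeq_c}_\kappa(\mathbb X,\mathbb Y)$ has steps indexed by $\alpha<\kappa$; at step $\alpha$ player I either chooses $x_\alpha\in X$ and then player II chooses $y_\alpha\in Y$, or player I chooses $y_\alpha\in Y$ and then II chooses $x_\alpha\in X$. Player II wins the play iff $\{\langle x_\alpha,y_\alpha\rangle:\alpha<\kappa\}\in\mathrm{PC}(\mathbb X,\mathbb Y)$; otherwise I wins. A strategy for II determines its move from the sequence of previous moves and I's current choice; it is winning if II wins every play in which it is followed. *)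

theory Defs
  imports Main
begin

text \<open>Relational language: index type 'i, arity function n. An L-structure is a
domain X together with interpretations R i, each a set of n i-tuples (lists of
length n i) over X.\<close>

definition is_struct :: "('i \<Rightarrow> nat) \<Rightarrow> 'a set \<Rightarrow> ('i \<Rightarrow> 'a list set) \<Rightarrow> bool" where
  "is_struct n X R \<longleftrightarrow> (\<forall>i. R i \<subseteq> {xs. length xs = n i \<and> set xs \<subseteq> X})"

text \<open>Partial condensations, represented as their graphs (sets of pairs).\<close>

definition PC :: "('i \<Rightarrow> nat) \<Rightarrow> 'a set \<Rightarrow> ('i \<Rightarrow> 'a list set) \<Rightarrow> 'b set \<Rightarrow> ('i \<Rightarrow> 'b list set)
    \<Rightarrow> ('a \<times> 'b) set set" where
  "PC n X RX Y RY = {f. f \<subseteq> X \<times> Y \<and> single_valued f \<and> single_valued (converse f) \<and>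
     (\<forall>i xs ys. length xs = n i \<and> list_all2 (\<lambda>x y. (x, y) \<in> f) xs ys \<and> xs \<in> RX i
        \<longrightarrow> ys \<in> RY i)}"

definition condensation :: "('i \<Rightarrow> nat) \<Rightarrow> 'a set \<Rightarrow> ('i \<Rightarrow> 'a list set) \<Rightarrow> 'b set \<Rightarrow> ('i \<Rightarrow> 'b list set)
    \<Rightarrow> ('a \<times> 'b) set \<Rightarrow> bool" where
  "condensation n X RX Y RY f \<longleftrightarrow> f \<in> PC n X RX Y RY \<and> Domain f = X \<and> Range f = Y"

definition cond_le :: "('i \<Rightarrow> nat) \<Rightarrow> 'a set \<Rightarrow> ('i \<Rightarrow> 'a list set) \<Rightarrow> 'b set \<Rightarrow> ('i \<Rightarrow> 'b list set)
    \<Rightarrow> bool" where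
  "cond_le n X RX Y RY \<longleftrightarrow> (\<exists>f. condensation n X RX Y RY f)"

definition cond_eq :: "('i \<Rightarrow> nat) \<Rightarrow> 'a set \<Rightarrow> ('i \<Rightarrow> 'a list set) \<Rightarrow> 'b set \<Rightarrow> ('i \<Rightarrow> 'b list set)
    \<Rightarrow> bool" where
  "cond_eq n X RX Y RY \<longleftrightarrow> cond_le n X RX Y RY \<and> cond_le n Y RY X RX"

definition bfs :: "('i \<Rightarrow> nat) \<Rightarrow> 'a set \<Rightarrow> ('i \<Rightarrow> 'a list set) \<Rightarrow> 'b set \<Rightarrow> ('i \<Rightarrow> 'b list set)
    \<Rightarrow> ('a \<times> 'b) set set \<Rightarrow> bool" where
  "bfs n X RX Y RY \<Pi> \<longleftrightarrow> \<Pi> \<noteq> {} \<and> \<Pi> \<subseteq> PC n X RX Y RY \<and>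
     (\<forall>f\<in>\<Pi>. \<forall>x\<in>X. \<exists>g\<in>\<Pi>. f \<subseteq> g \<and> x \<in> Domain g) \<and>
     (\<forall>f\<in>\<Pi>. \<forall>y\<in>Y. \<exists>g\<in>\<Pi>. f \<subseteq> g \<and> y \<in> Range g)"

text \<open>The cardinal \<kappa> is represented by a cardinal order (initial ordinal) k.
Ordinals \<gamma> < \<kappa> are exactly the order types of the proper initial segments
underS k \<alpha> (\<alpha> \<in> Field k), so a sequence of length \<gamma> < \<kappa> is indexed by such a
segment. kclosed k P le: the partial order (P, le) is \<kappa>-closed.\<close>

definition kclosed :: "'k rel \<Rightarrow> 'p set \<Rightarrow> ('p \<Rightarrow> 'p \<Rightarrow> bool) \<Rightarrow> bool" where
  "kclosed k P le \<longleftrightarrow> (\<forall>\<alpha>\<in>Field k. \<forall>p :: 'k \<Rightarrow> 'p.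
     (\<forall>\<beta>\<in>underS k \<alpha>. p \<beta> \<in> P) \<and>
     (\<forall>\<beta>\<in>underS k \<alpha>. \<forall>\<gamma>\<in>underS k \<alpha>. (\<beta>, \<gamma>) \<in> k \<and> \<beta> \<noteq> \<gamma> \<longrightarrow> le (p \<gamma>) (p \<beta>))
     \<longrightarrow> (\<exists>q\<in>P. \<forall>\<beta>\<in>underS k \<alpha>. le q (p \<beta>)))"

definition closed_bfs :: "'k rel \<Rightarrow> ('i \<Rightarrow> nat) \<Rightarrow> 'a set \<Rightarrow> ('i \<Rightarrow> 'a list set) \<Rightarrow> 'b set
    \<Rightarrow> ('i \<Rightarrow> 'b list set) \<Rightarrow> ('a \<times> 'b) set set \<Rightarrow> bool" where
  "closed_bfs k n X RX Y RY \<Pi> \<longleftrightarrow> bfs n X RX Y RY \<Pi> \<and> kclosed k \<Pi> (\<lambda>f g. g \<subseteq> f)"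

text \<open>Player I's choice at step \<alpha> is c \<alpha> :: 'a + 'b
(Inl x: I chooses x \<in> X; Inr y: I chooses y \<in> Y); the pair played at step \<alpha> is
pl \<alpha> = (x_\<alpha>, y_\<alpha>). A strategy of II is a pair (sx, sy): sy answers
a choice x \<in> X with some y, sx answers a choice y \<in> Y with some x.\<close>

definition hist :: "'k rel \<Rightarrow> ('k \<Rightarrow> 'a + 'b) \<Rightarrow> ('k \<Rightarrow> 'a \<times> 'b) \<Rightarrow> 'k
    \<Rightarrow> ('k \<Rightarrow> (('a + 'b) \<times> ('a \<times> 'b)) option)" where
  "hist k c pl \<alpha> = (\<lambda>\<beta>. if \<beta> \<in> underS k \<alpha> then Some (c \<beta>, pl \<beta>) else None)"

definition follows :: "'k rel
    \<Rightarrow> ('k \<Rightarrow> ('k \<Rightarrow> (('a + 'b) \<times> ('a \<times> 'b)) option) \<Rightarrow> 'b \<Rightarrow> 'a)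
    \<Rightarrow> ('k \<Rightarrow> ('k \<Rightarrow> (('a + 'b) \<times> ('a \<times> 'b)) option) \<Rightarrow> 'a \<Rightarrow> 'b)
    \<Rightarrow> ('k \<Rightarrow> 'a + 'b) \<Rightarrow> ('k \<Rightarrow> 'a \<times> 'b) \<Rightarrow> bool" where
  "follows k sx sy c pl \<longleftrightarrow> (\<forall>\<alpha>\<in>Field k.
     pl \<alpha> = (case c \<alpha> of Inl x \<Rightarrow> (x, sy \<alpha> (hist k c pl \<alpha>) x)
                        | Inr y \<Rightarrow> (sx \<alpha> (hist k c pl \<alpha>) y, y)))"

definition legal_I :: "'k rel \<Rightarrow> 'a set \<Rightarrow> 'b set \<Rightarrow> ('k \<Rightarrow> 'a + 'b) \<Rightarrow> bool" where
  "legal_I k X Y c \<longleftrightarrow> (\<forall>\<alpha>\<in>Field k. case c \<alpha> of Inl x \<Rightarrow> x \<in> X | Inr y \<Rightarrow> y \<in> Y)"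

definition II_wins :: "'k rel \<Rightarrow> ('i \<Rightarrow> nat) \<Rightarrow> 'a set \<Rightarrow> ('i \<Rightarrow> 'a list set) \<Rightarrow> 'b set
    \<Rightarrow> ('i \<Rightarrow> 'b list set) \<Rightarrow> bool" where
  "II_wins k n X RX Y RY \<longleftrightarrow> (\<exists>sx sy. \<forall>c pl. legal_I k X Y c \<and> follows k sx sy c pl
      \<longrightarrow> pl ` Field k \<in> PC n X RX Y RY)"

end

theory Submission
  imports Defs
begin
unbundle cardinal_syntax

lemma rec_exists:
  assumes wo: "Well_order k"
    and cong: "\<And>p p' \<alpha>. (\<forall>\<beta>\<in>underS k \<alpha>. p \<beta> = p' \<beta>) \<Longrightarrow> F p \<alpha> = F p' \<alpha>"
  shows "\<exists>p. \<forall>\<alpha>. p \<alpha> = F p \<alpha>"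
proof -
  have wf: "wf (k - Id)" using wo wo_rel.WF wo_rel_def by blast
  define p where "p = wfrec (k - Id) F"
  have "p \<alpha> = F p \<alpha>" for \<alpha>
  proof -
    have "p \<alpha> = F (cut p (k-Id) \<alpha>) \<alpha>" using wfrec[OF wf] p_def by simp
    also have "\<dots> = F p \<alpha>" by (rule cong) (auto simp: underS_def cut_apply)
    finally show ?thesis .
  qed
  thus ?thesis by blast
qed

lemma PC_mono: "g \<subseteq> f \<Longrightarrow> f \<in> PC n X RX Y RY \<Longrightarrow> g \<in> PC n X RX Y RY"
proof -
  assume gf: "g \<subseteq> f" and fP: "f \<in> PC n X RX Y RY"
  have "g \<subseteq> X \<times> Y" using gf fP by (auto simp: PC_def)
  moreover have "single_valued g" using gf fP single_valued_subset by (auto simp: PC_def)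
  moreover have "single_valued (converse g)"
    using gf fP single_valued_subset[of "converse g" "converse f"] by (auto simp: PC_def)
  moreover have "ys \<in> RY i" if "length xs = n i" "list_all2 (\<lambda>x y. (x, y) \<in> g) xs ys"
      "xs \<in> RX i" for i xs ys
  proof -
    have "list_all2 (\<lambda>x y. (x, y) \<in> f) xs ys"
      using that(2) by (rule list_all2_mono) (use gf in blast)
    with fP that(1,3) show ?thesis unfolding PC_def by blast
  qed
  ultimately show ?thesis unfolding PC_def by blast
qed

lemma PC_chain:
  assumes ne: "C \<noteq> {}" and ch: "subset.chain (PC n X RX Y RY) C"
  shows "\<Union>C \<in> PC n X RX Y RY"
proof -
  have CP: "C \<subseteq> PC n X RX Y RY" and tot: "\<forall>f\<in>C. \<forall>g\<in>C. f \<subseteq> g \<or> g \<subseteq> f"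
    using ch by (auto simp: subset_chain_def)
  have "\<Union>C \<subseteq> X \<times> Y" using CP by (auto simp: PC_def)
  moreover have "single_valued (\<Union>C)"
  proof (rule single_valuedI)
    fix x y z assume "(x, y) \<in> \<Union>C" "(x, z) \<in> \<Union>C"
    then obtain f g where f: "f \<in> C" "(x,y) \<in> f" and g: "g \<in> C" "(x,z) \<in> g" by auto
    from tot f g obtain h where "h \<in> C" "(x,y) \<in> h" "(x,z) \<in> h" by blast
    with CP show "y = z" by (auto simp: PC_def single_valued_def)
  qed
  moreover have "single_valued (converse (\<Union>C))"
  proof (rule single_valuedI)
    fix x y z assume "(x, y) \<in> converse (\<Union>C)" "(x, z) \<in> converse (\<Union>C)"
    then obtain f g where f: "f \<in> C" "(y,x) \<in> f" and g: "g \<in> C" "(z,x) \<in> g" by auto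
    from tot f g obtain h where "h \<in> C" "(y,x) \<in> h" "(z,x) \<in> h" by blast
    with CP show "y = z" by (auto simp: PC_def single_valued_def)
  qed
  moreover have "ys \<in> RY i" if "length xs = n i" "list_all2 (\<lambda>x y. (x, y) \<in> \<Union>C) xs ys"
      "xs \<in> RX i" for i xs ys
  proof -
    have "set (zip xs ys) \<subseteq> \<Union>C" using that(2) by (auto simp: list_all2_iff)
    then obtain B where B: "B \<in> C" "set (zip xs ys) \<subseteq> B"
      using finite_subset_Union_chain[OF finite_set _ ne ch] by blast
    have "list_all2 (\<lambda>x y. (x, y) \<in> B) xs ys" using that(2) B(2)
      by (auto simp: list_all2_iff)
    with B(1) CP that(1,3) show ?thesis by (auto simp: PC_def)
  qed
  ultimately show ?thesis by (auto simp: PC_def)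
qed

lemma enum_exists:
  assumes "Card_order k" "|X| =o k" "|Y| =o k" "infinite X"
  obtains c where "c ` Field k = X <+> Y"
proof -
  have "|Y| =o |X|" using assms by (meson ordIso_symmetric ordIso_transitive)
  then have "|Y| \<le>o |X|" using ordIso_iff_ordLeq by blast
  then have "|X <+> Y| =o |X|" using card_of_Plus_infinite1 assms(4) by blast
  then have "|X <+> Y| =o |Field k|"
    using assms(1,2) card_of_Field_ordIso by (meson ordIso_symmetric ordIso_transitive)
  then obtain g where "bij_betw g (X <+> Y) (Field k)" using card_of_ordIso by blast
  then have "bij_betw (inv_into (X <+> Y) g) (Field k) (X <+> Y)" by (rule bij_betw_inv_into)
  then show ?thesis using that bij_betw_imp_surj_on by blast
qed

lemma a_b: "condensation n X RX Y RY f \<Longrightarrow> closed_bfs k n X RX Y RY {f}"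
  unfolding closed_bfs_def bfs_def kclosed_def condensation_def by auto

lemma a_c:
  fixes f :: "('a \<times> 'b) set" and k :: "'k rel"
  assumes "condensation n X RX Y RY f"
  shows "II_wins k n X RX Y RY"
proof -
  have fP: "f \<in> PC n X RX Y RY" and D: "Domain f = X" and R: "Range f = Y"
    using assms by (auto simp: condensation_def)
  have sv: "single_valued f" "single_valued (converse f)" using fP by (auto simp: PC_def)
  define sx :: "'k \<Rightarrow> ('k \<Rightarrow> (('a + 'b) \<times> ('a \<times> 'b)) option) \<Rightarrow> 'b \<Rightarrow> 'a"
    where "sx = (\<lambda>\<alpha> h y. THE x. (x,y) \<in> f)"
  define sy :: "'k \<Rightarrow> ('k \<Rightarrow> (('a + 'b) \<times> ('a \<times> 'b)) option) \<Rightarrow> 'a \<Rightarrow> 'b"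
    where "sy = (\<lambda>\<alpha> h x. THE y. (x,y) \<in> f)"
  have "legal_I k X Y c \<and> follows k sx sy c pl \<longrightarrow> pl ` Field k \<in> PC n X RX Y RY" for c pl
  proof
    assume a: "legal_I k X Y c \<and> follows k sx sy c pl"
    have "pl \<alpha> \<in> f" if \<alpha>: "\<alpha> \<in> Field k" for \<alpha>
    proof (cases "c \<alpha>")
      case (Inl x)
      with a \<alpha> have x: "x \<in> X" and pe: "pl \<alpha> = (x, THE y. (x,y) \<in> f)"
        by (auto simp: legal_I_def follows_def sx_def sy_def)
      from x D obtain y where y: "(x,y) \<in> f" by auto
      have "(THE y. (x,y) \<in> f) = y" using y sv(1) by (auto simp: single_valued_def)
      with y pe show ?thesis by simp
    next
      case (Inr y)
      with a \<alpha> have y: "y \<in> Y" and pe: "pl \<alpha> = (THE x. (x,y) \<in> f, y)"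
        by (auto simp: legal_I_def follows_def sx_def sy_def)
      from y R obtain x where x: "(x,y) \<in> f" by auto
      have "(THE x. (x,y) \<in> f) = x" using x sv(2) by (auto simp: single_valued_def)
      with x pe show ?thesis by simp
    qed
    then have "pl ` Field k \<subseteq> f" by auto
    then show "pl ` Field k \<in> PC n X RX Y RY" by (rule PC_mono[OF _ fP])
  qed
  then have "\<forall>c pl. legal_I k X Y c \<and> follows k sx sy c pl \<longrightarrow> pl ` Field k \<in> PC n X RX Y RY"
    by blast
  then show ?thesis unfolding II_wins_def by (intro exI[of _ sx] exI[of _ sy])
qed


lemma b_a:
  fixes k :: "'k rel" and \<Pi> :: "('a \<times> 'b) set set"
  assumes wo: "Well_order k" and cb: "closed_bfs k n X RX Y RY \<Pi>"
    and cs: "c ` Field k = X <+> Y" and Xne: "X \<noteq> {}"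
  shows "cond_le n X RX Y RY"
proof -
  from cb have sub: "\<Pi> \<subseteq> PC n X RX Y RY"
    and e1: "\<forall>f\<in>\<Pi>. \<forall>x\<in>X. \<exists>g\<in>\<Pi>. f \<subseteq> g \<and> x \<in> Domain g"
    and e2: "\<forall>f\<in>\<Pi>. \<forall>y\<in>Y. \<exists>g\<in>\<Pi>. f \<subseteq> g \<and> y \<in> Range g"
    and kc: "kclosed k \<Pi> (\<lambda>f g. g \<subseteq> f)"
    by (auto simp: closed_bfs_def bfs_def)
  define Q where "Q = (\<lambda>(p::'k \<Rightarrow> ('a \<times> 'b) set) \<alpha>. SOME q. q \<in> \<Pi> \<and> (\<forall>\<beta>\<in>underS k \<alpha>. p \<beta> \<subseteq> q))"
  define F where "F = (\<lambda>p \<alpha>. case c \<alpha> of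
      Inl x \<Rightarrow> SOME g. g \<in> \<Pi> \<and> Q p \<alpha> \<subseteq> g \<and> x \<in> Domain g
    | Inr y \<Rightarrow> SOME g. g \<in> \<Pi> \<and> Q p \<alpha> \<subseteq> g \<and> y \<in> Range g)"
  have "\<exists>p. \<forall>\<alpha>. p \<alpha> = F p \<alpha>"
  proof (rule rec_exists[OF wo])
    fix p p' :: "'k \<Rightarrow> ('a \<times> 'b) set" and \<alpha>
    assume "\<forall>\<beta>\<in>underS k \<alpha>. p \<beta> = p' \<beta>"
    then have "(\<lambda>q. q \<in> \<Pi> \<and> (\<forall>\<beta>\<in>underS k \<alpha>. p \<beta> \<subseteq> q)) =
               (\<lambda>q. q \<in> \<Pi> \<and> (\<forall>\<beta>\<in>underS k \<alpha>. p' \<beta> \<subseteq> q))" by auto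
    then have "Q p \<alpha> = Q p' \<alpha>" unfolding Q_def by simp
    then show "F p \<alpha> = F p' \<alpha>" unfolding F_def by (simp only: \<open>Q p \<alpha> = Q p' \<alpha>\<close>)
  qed
  then obtain p where pe: "\<And>\<alpha>. p \<alpha> = F p \<alpha>" by blast
  have WF: "wf (k - Id)" using wo wo_rel.WF wo_rel_def by blast
  have inv: "\<alpha> \<in> Field k \<longrightarrow> p \<alpha> \<in> \<Pi> \<and> (\<forall>\<beta>\<in>underS k \<alpha>. p \<beta> \<subseteq> p \<alpha>) \<and>
      (case c \<alpha> of Inl x \<Rightarrow> x \<in> Domain (p \<alpha>) | Inr y \<Rightarrow> y \<in> Range (p \<alpha>))" for \<alpha>
  proof (induction \<alpha> rule: wf_induct[OF WF])
    case (1 \<alpha>)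
    show ?case
    proof
      assume \<alpha>: "\<alpha> \<in> Field k"
      have IHs: "p \<beta> \<in> \<Pi> \<and> (\<forall>\<gamma>\<in>underS k \<beta>. p \<gamma> \<subseteq> p \<beta>)" if "\<beta> \<in> underS k \<alpha>" for \<beta>
        using 1 that by (auto simp: underS_def intro: FieldI1)
      have "\<exists>q\<in>\<Pi>. \<forall>\<beta>\<in>underS k \<alpha>. p \<beta> \<subseteq> q"
      proof -
        have c1: "\<forall>\<beta>\<in>underS k \<alpha>. p \<beta> \<in> \<Pi>" using IHs by blast
        have c2: "\<forall>\<beta>\<in>underS k \<alpha>. \<forall>\<gamma>\<in>underS k \<alpha>. (\<beta>, \<gamma>) \<in> k \<and> \<beta> \<noteq> \<gamma> \<longrightarrow> p \<beta> \<subseteq> p \<gamma>"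
          using IHs by (auto simp: underS_def)
        show ?thesis using kc \<alpha> c1 c2 unfolding kclosed_def by blast
      qed
      then have "\<exists>q. q \<in> \<Pi> \<and> (\<forall>\<beta>\<in>underS k \<alpha>. p \<beta> \<subseteq> q)" by blast
      then have q: "Q p \<alpha> \<in> \<Pi> \<and> (\<forall>\<beta>\<in>underS k \<alpha>. p \<beta> \<subseteq> Q p \<alpha>)"
        unfolding Q_def by (rule someI_ex)
      have cin: "c \<alpha> \<in> X <+> Y" using cs \<alpha> by blast
      show "p \<alpha> \<in> \<Pi> \<and> (\<forall>\<beta>\<in>underS k \<alpha>. p \<beta> \<subseteq> p \<alpha>) \<and>
          (case c \<alpha> of Inl x \<Rightarrow> x \<in> Domain (p \<alpha>) | Inr y \<Rightarrow> y \<in> Range (p \<alpha>))"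
      proof (cases "c \<alpha>")
        case (Inl x)
        with cin have "x \<in> X" by auto
        moreover have "Q p \<alpha> \<in> \<Pi>" using q by (rule conjunct1)
        ultimately obtain g0 where "g0 \<in> \<Pi> \<and> Q p \<alpha> \<subseteq> g0 \<and> x \<in> Domain g0"
          using e1 by blast
        then have ex: "\<exists>g. g \<in> \<Pi> \<and> Q p \<alpha> \<subseteq> g \<and> x \<in> Domain g" by (rule exI)
        have pa: "p \<alpha> = (SOME g. g \<in> \<Pi> \<and> Q p \<alpha> \<subseteq> g \<and> x \<in> Domain g)"
          using pe[of \<alpha>] Inl by (simp add: F_def)
        have g: "p \<alpha> \<in> \<Pi> \<and> Q p \<alpha> \<subseteq> p \<alpha> \<and> x \<in> Domain (p \<alpha>)"
          unfolding pa by (rule someI_ex[OF ex])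
        have "\<forall>\<beta>\<in>underS k \<alpha>. p \<beta> \<subseteq> p \<alpha>" using q g by blast
        with g Inl show ?thesis by simp
      next
        case (Inr y)
        with cin have "y \<in> Y" by auto
        moreover have "Q p \<alpha> \<in> \<Pi>" using q by (rule conjunct1)
        ultimately obtain g0 where "g0 \<in> \<Pi> \<and> Q p \<alpha> \<subseteq> g0 \<and> y \<in> Range g0"
          using e2 by blast
        then have ex: "\<exists>g. g \<in> \<Pi> \<and> Q p \<alpha> \<subseteq> g \<and> y \<in> Range g" by (rule exI)
        have pa: "p \<alpha> = (SOME g. g \<in> \<Pi> \<and> Q p \<alpha> \<subseteq> g \<and> y \<in> Range g)"
          using pe[of \<alpha>] Inr by (simp add: F_def)
        have g: "p \<alpha> \<in> \<Pi> \<and> Q p \<alpha> \<subseteq> p \<alpha> \<and> y \<in> Range (p \<alpha>)"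
          unfolding pa by (rule someI_ex[OF ex])
        have "\<forall>\<beta>\<in>underS k \<alpha>. p \<beta> \<subseteq> p \<alpha>" using q g by blast
        with g Inr show ?thesis by simp
      qed
    qed
  qed
  define f where "f = \<Union>(p ` Field k)"
  have Fne: "Field k \<noteq> {}" using cs Xne by auto
  have tot: "\<forall>a\<in>Field k. \<forall>b\<in>Field k. a \<noteq> b \<longrightarrow> (a, b) \<in> k \<or> (b, a) \<in> k"
    using wo unfolding well_order_on_def linear_order_on_def total_on_def by blast
  have ch: "subset.chain (PC n X RX Y RY) (p ` Field k)"
    unfolding subset_chain_def
  proof (intro conjI ballI)
    show "p ` Field k \<subseteq> PC n X RX Y RY" using inv sub by blast
  next
    fix A B assume "A \<in> p ` Field k" "B \<in> p ` Field k"
    then obtain a b where ab: "a \<in> Field k" "b \<in> Field k" "A = p a" "B = p b" by blast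
    show "A \<subseteq> B \<or> B \<subseteq> A"
    proof (cases "a = b")
      case True then show ?thesis using ab by simp
    next
      case False
      with tot ab have "(a, b) \<in> k \<or> (b, a) \<in> k" by blast
      with False have "a \<in> underS k b \<or> b \<in> underS k a" by (auto simp: underS_def)
      then show ?thesis using inv[of a] inv[of b] ab by blast
    qed
  qed
  have fP: "f \<in> PC n X RX Y RY" unfolding f_def using PC_chain[OF _ ch] Fne by blast
  have "Domain f = X"
  proof
    show "Domain f \<subseteq> X" using fP by (auto simp: PC_def)
    show "X \<subseteq> Domain f"
    proof
      fix x assume "x \<in> X"
      then obtain a where a: "a \<in> Field k" "c a = Inl x" using cs by (metis InlI imageE)
      then have "x \<in> Domain (p a)" using inv[of a] by auto
      with a show "x \<in> Domain f" unfolding f_def by blast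
    qed
  qed
  moreover have "Range f = Y"
  proof
    show "Range f \<subseteq> Y" using fP by (auto simp: PC_def)
    show "Y \<subseteq> Range f"
    proof
      fix y assume "y \<in> Y"
      then obtain a where a: "a \<in> Field k" "c a = Inr y" using cs by (metis InrI imageE)
      then have "y \<in> Range (p a)" using inv[of a] by auto
      with a show "y \<in> Range f" unfolding f_def by blast
    qed
  qed
  ultimately show ?thesis using fP unfolding cond_le_def condensation_def by blast
qed

lemma c_a:
  fixes k :: "'k rel" and X :: "'a set" and Y :: "'b set" and c :: "'k \<Rightarrow> 'a + 'b"
  assumes wo: "Well_order k" and W: "II_wins k n X RX Y RY"
    and cs: "c ` Field k = X <+> Y"
  shows "cond_le n X RX Y RY"
proof -
  obtain sx sy where W: "\<And>c pl. legal_I k X Y c \<and> follows k sx sy c pl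
      \<Longrightarrow> pl ` Field k \<in> PC n X RX Y RY" using W unfolding II_wins_def by blast
  define F where "F = (\<lambda>pl \<alpha>. case c \<alpha> of Inl x \<Rightarrow> (x, sy \<alpha> (hist k c pl \<alpha>) x)
                        | Inr y \<Rightarrow> (sx \<alpha> (hist k c pl \<alpha>) y, y))"
  have "\<exists>pl. \<forall>\<alpha>. pl \<alpha> = F pl \<alpha>"
  proof (rule rec_exists[OF wo])
    fix p p' :: "'k \<Rightarrow> 'a \<times> 'b" and \<alpha>
    assume "\<forall>\<beta>\<in>underS k \<alpha>. p \<beta> = p' \<beta>"
    then have "hist k c p \<alpha> = hist k c p' \<alpha>" unfolding hist_def by auto
    then show "F p \<alpha> = F p' \<alpha>" unfolding F_def by (simp only:)
  qed
  then obtain pl where pe: "\<And>\<alpha>. pl \<alpha> = F pl \<alpha>" by blast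
  have fo: "follows k sx sy c pl" unfolding follows_def using pe F_def by simp
  have le: "legal_I k X Y c" unfolding legal_I_def
  proof
    fix \<alpha> assume "\<alpha> \<in> Field k"
    then have "c \<alpha> \<in> X <+> Y" using cs by blast
    then show "case c \<alpha> of Inl x \<Rightarrow> x \<in> X | Inr y \<Rightarrow> y \<in> Y" by auto
  qed
  define f where "f = pl ` Field k"
  have fP: "f \<in> PC n X RX Y RY" using W le fo f_def by blast
  have "Domain f = X"
  proof
    show "Domain f \<subseteq> X" using fP by (auto simp: PC_def)
    show "X \<subseteq> Domain f"
    proof
      fix x assume "x \<in> X"
      then obtain a where a: "a \<in> Field k" "c a = Inl x" using cs by (metis InlI imageE)
      then have "fst (pl a) = x" using pe[of a] by (simp add: F_def)
      with a show "x \<in> Domain f" unfolding f_def by (metis Domain.intros image_eqI prod.collapse)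
    qed
  qed
  moreover have "Range f = Y"
  proof
    show "Range f \<subseteq> Y" using fP by (auto simp: PC_def)
    show "Y \<subseteq> Range f"
    proof
      fix y assume "y \<in> Y"
      then obtain a where a: "a \<in> Field k" "c a = Inr y" using cs by (metis InrI imageE)
      then have "snd (pl a) = y" using pe[of a] by (simp add: F_def)
      with a show "y \<in> Range f" unfolding f_def by (metis Range.intros image_eqI prod.collapse)
    qed
  qed
  ultimately show ?thesis using fP unfolding cond_le_def condensation_def by blast
qed

lemma part1:
  fixes k :: "'k rel"
  assumes "Card_order k" "|X| =o k" "|Y| =o k" "infinite X"
  shows "(cond_le n X RX Y RY \<longleftrightarrow> (\<exists>\<Pi>. closed_bfs k n X RX Y RY \<Pi>))
       \<and> ((\<exists>\<Pi>. closed_bfs k n X RX Y RY \<Pi>) \<longleftrightarrow> II_wins k n X RX Y RY)"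
proof -
  obtain c where cs: "c ` Field k = X <+> Y" using enum_exists[OF assms] by blast
  have wo: "Well_order k" using assms(1) card_order_on_well_order_on by blast
  have Xne: "X \<noteq> {}" using assms(4) by auto
  have ab: "cond_le n X RX Y RY \<Longrightarrow> \<exists>\<Pi>. closed_bfs k n X RX Y RY \<Pi>"
    unfolding cond_le_def using a_b by blast
  have ba: "closed_bfs k n X RX Y RY \<Pi> \<Longrightarrow> cond_le n X RX Y RY" for \<Pi>
    using b_a[OF wo _ cs Xne] by blast
  have ac: "cond_le n X RX Y RY \<Longrightarrow> II_wins k n X RX Y RY"
    unfolding cond_le_def using a_c by blast
  have ca: "II_wins k n X RX Y RY \<Longrightarrow> cond_le n X RX Y RY"
    using c_a[OF wo _ cs] by blast
  show ?thesis using ab ba ac ca by blast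
qed

theorem theorem3p1:
  fixes n :: "'i \<Rightarrow> nat"
    and X :: "'a set" and RX :: "'i \<Rightarrow> 'a list set"
    and Y :: "'b set" and RY :: "'i \<Rightarrow> 'b list set"
    and k :: "'k rel"
  assumes "is_struct n X RX" and "is_struct n Y RY"
    and "Card_order k"
    and "(card_of X, k) \<in> ordIso" and "(card_of Y, k) \<in> ordIso"
    and "infinite X"
  shows "(cond_le n X RX Y RY \<longleftrightarrow> (\<exists>\<Pi>. closed_bfs k n X RX Y RY \<Pi>))
       \<and> ((\<exists>\<Pi>. closed_bfs k n X RX Y RY \<Pi>) \<longleftrightarrow> II_wins k n X RX Y RY)
       \<and> (cond_eq n X RX Y RY \<longleftrightarrow>
            (\<exists>\<Pi>1 \<Pi>2. closed_bfs k n X RX Y RY \<Pi>1 \<and> closed_bfs k n Y RY X RX \<Pi>2))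
       \<and> ((\<exists>\<Pi>1 \<Pi>2. closed_bfs k n X RX Y RY \<Pi>1 \<and> closed_bfs k n Y RY X RX \<Pi>2) \<longleftrightarrow>
            II_wins k n X RX Y RY \<and> II_wins k n Y RY X RX)"
proof -
  have "|Y| =o |X|" using assms(4,5) by (meson ordIso_symmetric ordIso_transitive)
  then have iY: "infinite Y" using assms(6) card_of_ordIso_finite by blast
  have P1: "(cond_le n X RX Y RY \<longleftrightarrow> (\<exists>\<Pi>. closed_bfs k n X RX Y RY \<Pi>))
       \<and> ((\<exists>\<Pi>. closed_bfs k n X RX Y RY \<Pi>) \<longleftrightarrow> II_wins k n X RX Y RY)"
    using part1 assms(3,4,5,6) by blast
  have P2: "(cond_le n Y RY X RX \<longleftrightarrow> (\<exists>\<Pi>. closed_bfs k n Y RY X RX \<Pi>))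
       \<and> ((\<exists>\<Pi>. closed_bfs k n Y RY X RX \<Pi>) \<longleftrightarrow> II_wins k n Y RY X RX)"
    using part1 assms(3,4,5) iY by blast
  show ?thesis using P1 P2 unfolding cond_eq_def by blast
qed

end
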